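(* Consider $n$ flows sharing a server that performs interleaved weighted round robin (IWRR) with positive integer weights $w_1,\dots,w_n$, and fix a flow of interest $f_i$. Then for every backlogged period $(s,t]$ of $f_i$ and every $j\neq i$, \[ \frac{D_i(s,t)}{w_i l_i^{\min}} \;\geq\; \frac{\big[D_j(s,t)-\big([w_j-w_i]^++1\big)l_j^{\max}\big]^+}{(w_j+w_i)\,l_j^{\max}}. \] That is, IWRR is a bandwidth-sharing policy for $f_i$ with weights $\phi_i''=w_i l_i^{\min}$, $\phi_j''=(w_j+w_i)l_j^{\max}$ ($j\neq i$) and penalty terms $H_{ij}''=([w_j-w_i]^++1)\,l_j^{\max}\,\mathbb{1}_{\{i\neq j\}}$.
   Context: Each flow $f_k$ sends packets with sizes in $[l_k^{\min},l_k^{\max}]$, $0<l_k^{\min}\le l_k^{\max}$, queued FIFO in a per-flow queue. IWRR: let $w_{\max}=\max_k w_k$. The server runs rounds forever; each round consists of cycles $c=1,\dots,w_{\max}$; in cycle $c$ the server visits flows $k=1,\dots,n$ in order and, if queue $k$ is nonempty and $c\le w_k$, transmits (non-preemptively) exactly one packet from the head of queue $k$. $D_k(t)$ is the cumulative data of flow $k$ that has left the server in $[0,t)$, $A_k(t)$ the cumulative arrivals, $D_k\le A_k$, $D_k(s,t):=D_k(t)-D_k(s)$. An interval $(s,t]$ is a backlogged period of $f_i$ if $D_i(\tau)<A_i(\tau)$ for all $\tau\in(s,t]$. $[x]^+:=\max\{x,0\}$. A server has a bandwidth-sharing policy if there exist weights $\phi_k>0$ and numbers $H_{ij}\ge0$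 such that for every backlogged period $(s,t]$ of $f_i$ and all $j\neq i$: $D_i(s,t)/\phi_i\ge[D_j(s,t)-H_{ij}]^+/\phi_j$. *)

theory Defs
  imports Main "HOL-Library.Extended_Nat"
begin

text \<open>
Flow k has npk k (possibly infinitely many) packets,
indexed in FIFO order m = 0,1,...; packet m of flow k has size sz k m and arrival time arr k m.
The IWRR server makes an infinite sequence of visits v = 0,1,2,...; visit v belongs to
round v div (n * wmax), cycle (v mod (n*wmax)) div n + 1, and visits flow v mod n.
Visit v happens at time vt v. At a visit the server transmits (non-preemptively) the head
packet of the visited queue iff the cycle number is at most the flow's weight and the queue
is nonempty; sent v records this, and the transmission occupies [vt v, et v].
\<close>

definition wmax :: "nat \<Rightarrow> (nat \<Rightarrow> nat) \<Rightarrow> nat" where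
  "wmax n w = Max (w ` {..<n})"

definition vflow :: "nat \<Rightarrow> nat \<Rightarrow> nat" where
  "vflow n v = v mod n"

definition vcycle :: "nat \<Rightarrow> (nat \<Rightarrow> nat) \<Rightarrow> nat \<Rightarrow> nat" where
  "vcycle n w v = (v mod (n * wmax n w)) div n + 1"

text \<open>number of packets of flow k transmitted at visits strictly before visit v
  (= index of the head packet of queue k at visit v)\<close>
definition nsent :: "nat \<Rightarrow> (nat \<Rightarrow> bool) \<Rightarrow> nat \<Rightarrow> nat \<Rightarrow> nat" where
  "nsent n sent k v = card {u. u < v \<and> sent u \<and> vflow n u = k}"

definition qnonempty :: "nat \<Rightarrow> (nat \<Rightarrow> enat) \<Rightarrow> (nat \<Rightarrow> nat \<Rightarrow> real) \<Rightarrow>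
    (nat \<Rightarrow> real) \<Rightarrow> (nat \<Rightarrow> bool) \<Rightarrow> nat \<Rightarrow> nat \<Rightarrow> bool" where
  "qnonempty n npk arr vt sent k v \<longleftrightarrow>
     (let h = nsent n sent k v in enat h < npk k \<and> arr k h \<le> vt v)"

definition iwrr_run :: "nat \<Rightarrow> (nat \<Rightarrow> nat) \<Rightarrow> (nat \<Rightarrow> enat) \<Rightarrow> (nat \<Rightarrow> nat \<Rightarrow> real) \<Rightarrow>
    (nat \<Rightarrow> real) \<Rightarrow> (nat \<Rightarrow> bool) \<Rightarrow> (nat \<Rightarrow> real) \<Rightarrow> bool" where
  "iwrr_run n w npk arr vt sent et \<longleftrightarrow>
     0 \<le> vt 0 \<and>
     (\<forall>v. sent v \<longleftrightarrow> vcycle n w v \<le> w (vflow n v) \<and> qnonempty n npk arr vt sent (vflow n v) v) \<and>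
     (\<forall>v. sent v \<longrightarrow> vt v \<le> et v \<and> et v \<le> vt (Suc v)) \<and>
     (\<forall>v. \<not> sent v \<longrightarrow> vt v \<le> vt (Suc v))"

definition Arr :: "(nat \<Rightarrow> enat) \<Rightarrow> (nat \<Rightarrow> nat \<Rightarrow> real) \<Rightarrow> (nat \<Rightarrow> nat \<Rightarrow> real) \<Rightarrow>
    nat \<Rightarrow> real \<Rightarrow> real" where
  "Arr npk arr sz k t = (\<Sum>m\<in>{m. enat m < npk k \<and> arr k m < t}. sz k m)"

text \<open>cumulative departures of flow k in [0,t): a packet leaves when its transmission ends\<close>
definition Dep :: "nat \<Rightarrow> (nat \<Rightarrow> nat \<Rightarrow> real) \<Rightarrow> (nat \<Rightarrow> bool) \<Rightarrow> (nat \<Rightarrow> real) \<Rightarrow>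
    nat \<Rightarrow> real \<Rightarrow> real" where
  "Dep n sz sent et k t =
     (\<Sum>v\<in>{v. sent v \<and> vflow n v = k \<and> et v < t}. sz k (nsent n sent k v))"

definition backlogged_period :: "(real \<Rightarrow> real) \<Rightarrow> (real \<Rightarrow> real) \<Rightarrow> real \<Rightarrow> real \<Rightarrow> bool" where
  "backlogged_period D A s t \<longleftrightarrow> s \<le> t \<and> (\<forall>\<tau>. s < \<tau> \<and> \<tau> \<le> t \<longrightarrow> D \<tau> < A \<tau>)"

end

theory Submission
  imports Defs
begin


definition cnt :: "nat \<Rightarrow> nat \<Rightarrow> nat \<Rightarrow> nat" where
  "cnt W w x = card {g. g < x \<and> g mod W < w}"

lemma cnt_Suc: "cnt W w (Suc x) = cnt W w x + (if x mod W < w then 1 else 0)"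
proof -
  have "{g. g < Suc x \<and> g mod W < w} = (if x mod W < w then insert x {g. g < x \<and> g mod W < w} else {g. g < x \<and> g mod W < w})"
    by (auto simp: less_Suc_eq)
  then show ?thesis unfolding cnt_def by simp
qed

lemma cnt_part: assumes "0 < W" "w \<le> W" "c \<le> W" shows "cnt W w (r*W + c) = cnt W w (r*W) + min w c"
  using assms(3)
proof (induction c)
  case 0 then show ?case by simp
next
  case (Suc c)
  have "(r*W + c) mod W = c" using Suc.prems by simp
  then show ?case using Suc by (simp add: cnt_Suc)
qed

lemma cnt_round: assumes "0 < W" "w \<le> W" shows "cnt W w (r*W) = w*r"
proof (induction r)
  case 0 then show ?case by (simp add: cnt_def)
next
  case (Suc r)
  have "cnt W w (Suc r * W) = cnt W w (r*W + W)" by (simp add: algebra_simps)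
  also have "\<dots> = w*r + w" using cnt_part[OF assms, of W r] Suc assms by simp
  finally show ?case by simp
qed

lemma cnt_formula: assumes "0 < W" "w \<le> W" "c \<le> W" shows "cnt W w (r*W + c) = w*r + min w c"
  using cnt_part[OF assms] cnt_round[OF assms(1,2)] by simp

lemma cnt_interval: assumes "x \<le> y"
  shows "card {g. x \<le> g \<and> g < y \<and> g mod W < w} = cnt W w y - cnt W w x"
proof -
  have "{g. g < y \<and> g mod W < w} = {g. g < x \<and> g mod W < w} \<union> {g. x \<le> g \<and> g < y \<and> g mod W < w}"
    using assms by auto
  moreover have "card (\<dots>) = cnt W w x + card {g. x \<le> g \<and> g < y \<and> g mod W < w}"
    unfolding cnt_def by (subst card_Un_disjoint) auto
  ultimately show ?thesis unfolding cnt_def by simp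
qed

lemma div_cmp_lt:
  fixes x y n :: nat
  assumes "x mod n = p" "y mod n = q" "p < q" "q < n"
  shows "x < y \<longleftrightarrow> x div n \<le> y div n"
proof -
  have x: "x = x div n * n + p" and y: "y = y div n * n + q" using assms by (metis div_mult_mod_eq)+
  show ?thesis
  proof
    assume "x < y"
    show "x div n \<le> y div n"
    proof (rule ccontr)
      assume "\<not> ?thesis"
      hence "Suc (y div n) \<le> x div n" by simp
      hence "Suc (y div n) * n \<le> x div n * n" by (rule mult_le_mono1)
      thus False using x y \<open>x < y\<close> assms by simp
    qed
  next
    assume "x div n \<le> y div n"
    hence "x div n * n \<le> y div n * n" by (rule mult_le_mono1)
    thus "x < y" using x y assms by linarith
  qed
qed

lemma div_cmp_le:
  fixes x y n :: nat
  assumes "x mod n = p" "y mod n = p" "0 < n"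
  shows "x \<le> y \<longleftrightarrow> x div n \<le> y div n"
proof -
  have x: "x = x div n * n + p" and y: "y = y div n * n + p" using assms by (metis div_mult_mod_eq)+
  show ?thesis
  proof
    assume "x \<le> y"
    show "x div n \<le> y div n"
    proof (rule ccontr)
      assume "\<not> ?thesis"
      hence "Suc (y div n) \<le> x div n" by simp
      hence "Suc (y div n) * n \<le> x div n * n" by (rule mult_le_mono1)
      moreover have "p < n" using assms(1,3) by auto
      ultimately show False using x y \<open>x \<le> y\<close> by simp
    qed
  next
    assume "x div n \<le> y div n"
    hence "x div n * n \<le> y div n * n" by (rule mult_le_mono1)
    thus "x \<le> y" using x y assms by linarith
  qed
qed


lemma gen_core:
  fixes wi wj ca cb R :: int
  assumes A: "0 < wi" "0 < wj" "0 \<le> ca" "ca \<le> wj" "0 \<le> cb" "cb \<le> wj" "0 \<le> R" "R = 0 \<longrightarrow> ca \<le> cb"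
  shows "wi*(cb+1-ca) \<le> wi*wi*R + (min wi cb - min wi ca)*(wi+wj) + wi*(max 0 (wj - wi) + 1)"
proof -
  have R0: "0 \<le> wi*wi*R" using A by simp
  have R1: "\<not> ca \<le> cb \<Longrightarrow> wi*wi \<le> wi*wi*R" using A by simp
  show ?thesis
  proof (cases "wj \<le> wi")
    case True
    hence m: "min wi cb = cb" "min wi ca = ca" "max 0 (wj - wi) = 0" using A by auto
    show ?thesis
    proof (cases "ca \<le> cb")
      case True
      have "wi*(cb-ca) \<le> (cb - ca)*(wi+wj)" using True A by (simp add: algebra_simps)
      then show ?thesis using R0 m by (simp add: algebra_simps)
    next
      case False
      have "wj*(ca-cb) \<le> wj * wj" using A False by (intro mult_left_mono) auto
      also have "\<dots> \<le> wi*wi" using A \<open>wj \<le> wi\<close> by (simp add: mult_mono)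
      also have "\<dots> \<le> wi*wi*R" using R1 False by simp
      finally show ?thesis using m by (simp add: algebra_simps)
    qed
  next
    case False
    hence D: "max 0 (wj - wi) = wj - wi" by auto
    show ?thesis
    proof (cases "wi \<le> ca")
      case ca: True
      show ?thesis
      proof (cases "wi \<le> cb")
        case True
        have "wi*(cb-ca) \<le> wi*(wj-wi)" using A ca True by (intro mult_left_mono) auto
        then show ?thesis using R0 D ca True by (simp add: algebra_simps)
      next
        case cb: False
        have "wi*wi \<le> wi*ca" using A ca by simp
        moreover have "0 \<le> cb*wj" using A by simp
        moreover have "wi*wi \<le> wi*wi*R" using R1 ca cb by simp
        ultimately show ?thesis using D ca cb by (simp add: algebra_simps)
      qed
    next
      case ca: False
      show ?thesis
      proof (cases "wi \<le> cb")
        case True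
        have "wi*(cb-wi) \<le> wi*(wj-wi)" using A True by (intro mult_left_mono) auto
        moreover have "wi*(wi-ca) \<le> (wi-ca)*(wi+wj)" using A ca by (simp add: algebra_simps)
        ultimately show ?thesis using R0 D ca True by (simp add: algebra_simps)
      next
        case cb: False
        show ?thesis
        proof (cases "ca \<le> cb")
          case True
          have "wi*(cb-ca) \<le> (cb - ca)*(wi+wj)" using True A by (simp add: algebra_simps)
          moreover have "0 \<le> wi*(wj-wi)" using A False by simp
          ultimately show ?thesis using R0 D ca cb by (simp add: algebra_simps)
        next
          case False
          have "wj*(ca-cb) \<le> wj*wi" using A ca cb by (intro mult_left_mono) auto
          moreover have "wi*wi \<le> wi*wi*R" using R1 False by simp
          ultimately show ?thesis using D ca cb by (simp add: algebra_simps)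
        qed
      qed
    qed
  qed
qed

lemma card_visits:
  fixes n k lo hi :: nat and P :: "nat \<Rightarrow> bool"
  assumes "0 < n" "k < n"
  shows "card {v. lo \<le> v div n \<and> v div n < hi \<and> v mod n = k \<and> P (v div n)} = card {g. lo \<le> g \<and> g < hi \<and> P g}"
proof -
  have "{v. lo \<le> v div n \<and> v div n < hi \<and> v mod n = k \<and> P (v div n)} = (\<lambda>g. g*n + k) ` {g. lo \<le> g \<and> g < hi \<and> P g}"
  proof (intro set_eqI iffI)
    fix v assume "v \<in> {v. lo \<le> v div n \<and> v div n < hi \<and> v mod n = k \<and> P (v div n)}"
    then show "v \<in> (\<lambda>g. g*n + k) ` {g. lo \<le> g \<and> g < hi \<and> P g}"
      by (auto intro!: image_eqI[where x="v div n"] simp: div_mult_mod_eq)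
  next
    fix v assume "v \<in> (\<lambda>g. g*n + k) ` {g. lo \<le> g \<and> g < hi \<and> P g}"
    then show "v \<in> {v. lo \<le> v div n \<and> v div n < hi \<and> v mod n = k \<and> P (v div n)}"
      using assms by auto
  qed
  moreover have "inj (\<lambda>g. g*n + k)" using assms by (auto intro!: injI)
  ultimately show ?thesis by (simp add: card_image inj_on_subset)
qed

lemma cnt_mono: "x \<le> y \<Longrightarrow> cnt W w x \<le> cnt W w y"
  unfolding cnt_def by (rule card_mono) auto

lemma cnt_interval_int: assumes "x \<le> y"
  shows "int (card {g. x \<le> g \<and> g < y \<and> g mod W < w}) = int (cnt W w y) - int (cnt W w x)"
  using cnt_interval[OF assms] cnt_mono[OF assms, of W w] by simp

lemma div_cmp_lt2:
  fixes x y n :: nat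
  assumes "x mod n = q" "y mod n = p" "p < q" "q < n"
  shows "x < y \<longleftrightarrow> x div n < y div n"
proof -
  have "y < x \<longleftrightarrow> y div n \<le> x div n" by (rule div_cmp_lt[OF assms(2,1,3,4)])
  moreover have "x \<noteq> y" using assms by auto
  ultimately show ?thesis by auto
qed


lemma visit_comb:
  fixes n W wi wj i j a b :: nat
  assumes n: "0 < n" and W: "0 < W" and i: "i < n" and j: "j < n" and ij: "i \<noteq> j"
    and wi: "0 < wi" "wi \<le> W" and wj: "0 < wj" "wj \<le> W" and ab: "a \<le> b"
    and am: "a mod n = j" and bm: "b mod n = j" and ac: "(a div n) mod W < wj" and bc: "(b div n) mod W < wj"
  shows "int wi * int (card {v. a \<le> v \<and> v \<le> b \<and> v mod n = j \<and> (v div n) mod W < wj})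
      \<le> int (card {u. a < u \<and> u < b \<and> u mod n = i \<and> (u div n) mod W < wi}) * (int wi + int wj)
        + int wi * (max 0 (int wj - int wi) + 1)"
proof -
  define Ga where "Ga = a div n"
  define Gb where "Gb = b div n"
  have GaGb: "Ga \<le> Gb" using ab by (simp add: Ga_def Gb_def div_le_mono)
  have Ej: "{v. a \<le> v \<and> v \<le> b \<and> v mod n = j \<and> (v div n) mod W < wj}
     = {v. Ga \<le> v div n \<and> v div n < Suc Gb \<and> v mod n = j \<and> (v div n) mod W < wj}"
  proof -
    have "a \<le> v \<longleftrightarrow> Ga \<le> v div n" "v \<le> b \<longleftrightarrow> v div n < Suc Gb" if "v mod n = j" for v
      using div_cmp_le[OF am that n] div_cmp_le[OF that bm n] unfolding Ga_def Gb_def by auto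
    then show ?thesis by blast
  qed
  define ra where "ra = Ga div W"
  define ca where "ca = Ga mod W"
  define rb where "rb = Gb div W"
  define cb where "cb = Gb mod W"
  have Ga: "Ga = ra*W + ca" and Gb: "Gb = rb*W + cb" by (simp_all add: ra_def ca_def rb_def cb_def)
  have ca: "ca < wj" and cb: "cb < wj" using ac bc by (simp_all add: ca_def cb_def Ga_def Gb_def)
  have rab: "ra \<le> rb" using GaGb by (simp add: ra_def rb_def div_le_mono)
  have rab0: "ra = rb \<Longrightarrow> ca \<le> cb" using GaGb Ga Gb by simp
  have cjb: "cnt W wj (Suc Gb) = wj*rb + min wj (cb+1)"
    using cnt_formula[OF W wj(2), of "cb+1" rb] Gb cb wj by simp
  have cja: "cnt W wj Ga = wj*ra + min wj ca"
    using cnt_formula[OF W wj(2), of ca ra] Ga ca wj by simp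
  define R where "R = int rb - int ra"
  have EjI: "int (card {v. a \<le> v \<and> v \<le> b \<and> v mod n = j \<and> (v div n) mod W < wj}) = int wj * R + int cb + 1 - int ca"
  proof -
    have "int (card {v. a \<le> v \<and> v \<le> b \<and> v mod n = j \<and> (v div n) mod W < wj})
       = int (cnt W wj (Suc Gb)) - int (cnt W wj Ga)"
      unfolding Ej card_visits[OF n j, of Ga "Suc Gb" "\<lambda>g. g mod W < wj"] using GaGb
      by (simp add: cnt_interval_int)
    also have "\<dots> = int wj * R + int cb + 1 - int ca" using ca cb cja cjb by (simp add: R_def algebra_simps)
    finally show ?thesis .
  qed
  have R0: "0 \<le> R" "R = 0 \<longrightarrow> int ca \<le> int cb" using rab rab0 by (auto simp: R_def)
  have cib: "cnt W wi Gb = wi*rb + min wi cb"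
    using cnt_formula[OF W wi(2), of "cb" rb] Gb cb wj by simp
  have cia: "cnt W wi Ga = wi*ra + min wi ca"
    using cnt_formula[OF W wi(2), of ca ra] Ga ca wj by simp
  have cib1: "cnt W wi (Suc Gb) = wi*rb + min wi (cb+1)"
    using cnt_formula[OF W wi(2), of "cb+1" rb] Gb cb wj by simp
  have cia1: "cnt W wi (Suc Ga) = wi*ra + min wi (ca+1)"
    using cnt_formula[OF W wi(2), of "ca+1" ra] Ga ca wj by simp
  show ?thesis
  proof (cases "j < i")
    case True
    have Ei: "{u. a < u \<and> u < b \<and> u mod n = i \<and> (u div n) mod W < wi}
      = {u. Ga \<le> u div n \<and> u div n < Gb \<and> u mod n = i \<and> (u div n) mod W < wi}"
    proof -
      have "a < u \<longleftrightarrow> Ga \<le> u div n" "u < b \<longleftrightarrow> u div n < Gb" if "u mod n = i" for u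
        using div_cmp_lt[OF am that True i] div_cmp_lt2[OF that bm True i] unfolding Ga_def Gb_def by auto
      then show ?thesis by blast
    qed
    have EiI: "int (card {u. a < u \<and> u < b \<and> u mod n = i \<and> (u div n) mod W < wi})
       = int wi * R + int (min wi cb) - int (min wi ca)"
    proof -
      have "int (card {u. a < u \<and> u < b \<and> u mod n = i \<and> (u div n) mod W < wi})
         = int (cnt W wi Gb) - int (cnt W wi Ga)"
        unfolding Ei card_visits[OF n i, of Ga Gb "\<lambda>g. g mod W < wi"] using GaGb
        by (simp add: cnt_interval_int)
      also have "\<dots> = int wi * R + int (min wi cb) - int (min wi ca)" using cia cib by (simp add: R_def algebra_simps)
      finally show ?thesis .
    qed
    have g: "int wi*(int cb+1-int ca) \<le> int wi*int wi*R + (min (int wi) (int cb) - min (int wi) (int ca))*(int wi+int wj) + int wi*(max 0 (int wj - int wi) + 1)"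
      using gen_core[of "int wi" "int wj" "int ca" "int cb" R] wi wj ca cb R0 by simp
    show ?thesis unfolding EjI EiI using g by (simp add: algebra_simps of_nat_min)
  next
    case False
    hence ji: "i < j" using ij by simp
    have Ei: "{u. a < u \<and> u < b \<and> u mod n = i \<and> (u div n) mod W < wi}
      = {u. Suc Ga \<le> u div n \<and> u div n < Suc Gb \<and> u mod n = i \<and> (u div n) mod W < wi}"
    proof -
      have "a < u \<longleftrightarrow> Suc Ga \<le> u div n" "u < b \<longleftrightarrow> u div n < Suc Gb" if "u mod n = i" for u
        using div_cmp_lt2[OF am that ji j] div_cmp_lt[OF that bm ji j] unfolding Ga_def Gb_def by auto
      then show ?thesis by blast
    qed
    have EiI: "int (card {u. a < u \<and> u < b \<and> u mod n = i \<and> (u div n) mod W < wi})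
       = int wi * R + int (min wi (cb+1)) - int (min wi (ca+1))"
    proof -
      have "int (card {u. a < u \<and> u < b \<and> u mod n = i \<and> (u div n) mod W < wi})
         = int (cnt W wi (Suc Gb)) - int (cnt W wi (Suc Ga))"
        unfolding Ei card_visits[OF n i, of "Suc Ga" "Suc Gb" "\<lambda>g. g mod W < wi"] using GaGb
        by (simp add: cnt_interval_int)
      also have "\<dots> = int wi * R + int (min wi (cb+1)) - int (min wi (ca+1))" using cia1 cib1 by (simp add: R_def algebra_simps)
      finally show ?thesis .
    qed
    have g: "int wi*(int (cb+1)+1-int (ca+1)) \<le> int wi*int wi*R + (min (int wi) (int (cb+1)) - min (int wi) (int (ca+1)))*(int wi+int wj) + int wi*(max 0 (int wj - int wi) + 1)"
      using gen_core[of "int wi" "int wj" "int (ca+1)" "int (cb+1)" R] wi wj ca cb R0 by simp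
    show ?thesis unfolding EjI EiI using g by (simp add: algebra_simps of_nat_min)
  qed
qed


locale iwrr =
  fixes n :: nat and w :: "nat \<Rightarrow> nat" and npk :: "nat \<Rightarrow> enat"
    and arr sz :: "nat \<Rightarrow> nat \<Rightarrow> real" and lmin lmax :: "nat \<Rightarrow> real"
    and vt et :: "nat \<Rightarrow> real" and sent :: "nat \<Rightarrow> bool"
  assumes npos: "0 < n"
    and w_pos: "\<forall>k<n. 0 < w k"
    and l_pos: "\<forall>k<n. 0 < lmin k \<and> lmin k \<le> lmax k"
    and sz_bounds: "\<forall>k<n. \<forall>m. enat m < npk k \<longrightarrow> lmin k \<le> sz k m \<and> sz k m \<le> lmax k"
    and arr_fifo: "\<forall>k<n. \<forall>m. enat (Suc m) < npk k \<longrightarrow> arr k m \<le> arr k (Suc m)"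
    and arr_locfin: "\<forall>k<n. \<forall>\<tau>. finite {m. enat m < npk k \<and> arr k m < \<tau>}"
    and run: "iwrr_run n w npk arr vt sent et"
begin

abbreviation "W \<equiv> wmax n w"
abbreviation "NS \<equiv> nsent n sent"

lemma W_pos: "0 < W" and w_le_W: "k < n \<Longrightarrow> w k \<le> W"
proof -
  have "w 0 \<le> W" unfolding wmax_def using npos by (intro Max_ge) auto
  then show "0 < W" using w_pos npos by fastforce
  show "k < n \<Longrightarrow> w k \<le> W" unfolding wmax_def by (intro Max_ge) auto
qed

lemma vcycle_iff: "vcycle n w v \<le> x \<longleftrightarrow> (v div n) mod W < x"
proof -
  have "v mod (n*W) = n*((v div n) mod W) + v mod n" by (simp add: mod_mult2_eq)
  hence "(v mod (n*W)) div n = (v div n) mod W" using npos by simp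
  then show ?thesis unfolding vcycle_def by auto
qed

lemma sent_iff: "sent v \<longleftrightarrow> (v div n) mod W < w (v mod n) \<and> qnonempty n npk arr vt sent (v mod n) v"
  using run unfolding iwrr_run_def vflow_def vcycle_iff by blast

lemma sent_et: "sent v \<Longrightarrow> vt v \<le> et v \<and> et v \<le> vt (Suc v)"
  using run unfolding iwrr_run_def by blast

lemma vt_step: "vt v \<le> vt (Suc v)"
  using run unfolding iwrr_run_def by force

lemma vt_mono: "u \<le> v \<Longrightarrow> vt u \<le> vt v"
  by (induction v rule: dec_induct) (auto intro: order_trans vt_step)

lemma sent_q: assumes "sent v" "v mod n = k"
  shows "enat (NS k v) < npk k" "arr k (NS k v) \<le> vt v"
  using assms sent_iff unfolding qnonempty_def Let_def by auto

lemma NS_strict: assumes "u < v" "sent u" "u mod n = k" shows "NS k u < NS k v"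
proof -
  have "{x. x < u \<and> sent x \<and> vflow n x = k} \<subset> {x. x < v \<and> sent x \<and> vflow n x = k}"
    using assms by (auto simp: vflow_def)
  then show ?thesis unfolding nsent_def by (intro psubset_card_mono) auto
qed

lemma NS_inj: "inj_on (NS k) {v. sent v \<and> v mod n = k}"
proof (rule inj_onI)
  fix x y assume "x \<in> {v. sent v \<and> v mod n = k}" "y \<in> {v. sent v \<and> v mod n = k}" "NS k x = NS k y"
  then show "x = y" using NS_strict[of x y k] NS_strict[of y x k] by (cases x y rule: linorder_cases) auto
qed

lemma NS_image: "NS k ` {x. x < u \<and> sent x \<and> x mod n = k} = {..<NS k u}"
proof -
  let ?P = "{x. x < u \<and> sent x \<and> x mod n = k}"
  have fin: "finite ?P" by auto
  have cardP: "card ?P = NS k u" unfolding nsent_def vflow_def by simp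
  have sub: "NS k ` ?P \<subseteq> {..<NS k u}" using NS_strict by auto
  have "card (NS k ` ?P) = card ?P" by (rule card_image, rule inj_on_subset[OF NS_inj]) auto
  then show ?thesis using card_subset_eq[OF _ sub] cardP by simp
qed

lemma arr_mono: assumes "k < n" "m \<le> m'" "enat m' < npk k" shows "arr k m \<le> arr k m'"
  using assms(2,3)
proof (induction m' rule: dec_induct)
  case base then show ?case by simp
next
  case (step x)
  have "enat x < npk k" using step.prems by (meson Suc_ile_eq order.strict_implies_order)
  then show ?case using step arr_fifo assms(1) by (meson order_trans)
qed

lemma S_finite: assumes "k < n" shows "finite {v. sent v \<and> v mod n = k \<and> et v < \<tau>}"
proof -
  let ?S = "{v. sent v \<and> v mod n = k \<and> et v < \<tau>}"
  have "NS k ` ?S \<subseteq> {m. enat m < npk k \<and> arr k m < \<tau>}"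
  proof
    fix m assume "m \<in> NS k ` ?S"
    then obtain v where v: "sent v" "v mod n = k" "et v < \<tau>" "m = NS k v" by auto
    then show "m \<in> {m. enat m < npk k \<and> arr k m < \<tau>}" using sent_q[OF v(1,2)] sent_et[OF v(1)] by auto
  qed
  hence "finite (NS k ` ?S)" using arr_locfin assms by (meson finite_subset)
  then show ?thesis by (rule finite_imageD) (rule inj_on_subset[OF NS_inj], auto)
qed

lemma Dep_alt: "Dep n sz sent et k \<tau> = (\<Sum>v\<in>{v. sent v \<and> v mod n = k \<and> et v < \<tau>}. sz k (NS k v))"
  unfolding Dep_def vflow_def by simp

lemma sz_sent: assumes "k < n" "sent v" "v mod n = k"
  shows "lmin k \<le> sz k (NS k v)" "sz k (NS k v) \<le> lmax k"
  using sz_bounds sent_q[OF assms(2,3)] assms(1) by auto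


lemma Dep_diff: assumes "k < n" "s \<le> t"
  shows "Dep n sz sent et k t - Dep n sz sent et k s = (\<Sum>v\<in>{v. sent v \<and> v mod n = k \<and> s \<le> et v \<and> et v < t}. sz k (NS k v))"
proof -
  let ?B = "{v. sent v \<and> v mod n = k \<and> et v < t}" and ?A = "{v. sent v \<and> v mod n = k \<and> et v < s}"
  have "?A \<subseteq> ?B" using assms by auto
  hence "sum (\<lambda>v. sz k (NS k v)) ?B = sum (\<lambda>v. sz k (NS k v)) (?B - ?A) + sum (\<lambda>v. sz k (NS k v)) ?A"
    using S_finite[OF assms(1)] by (simp add: sum.subset_diff)
  moreover have "?B - ?A = {v. sent v \<and> v mod n = k \<and> s \<le> et v \<and> et v < t}" by auto
  ultimately show ?thesis unfolding Dep_alt by simp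
qed

lemma backlog:
  assumes i: "i < n" and bp: "backlogged_period (Dep n sz sent et i) (Arr npk arr sz i) s t"
    and a: "sent a" "s \<le> et a" and b: "sent b" "et b < t" and u: "a < u" "u < b"
    and ui: "u mod n = i" "(u div n) mod W < w i"
  shows "sent u \<and> s \<le> et u \<and> et u < t"
proof -
  have s_le: "s \<le> vt u" using a sent_et[OF a(1)] vt_mono[of "Suc a" u] u by linarith
  have lt_t: "vt (Suc u) < t" using b sent_et[OF b(1)] vt_mono[of "Suc u" b] u by linarith
  have vu: "vt u < t" using lt_t vt_step[of u] by linarith
  have "qnonempty n npk arr vt sent i u"
  proof (rule ccontr)
    assume ne: "\<not> qnonempty n npk arr vt sent i u"
    define h where "h = NS i u"
    have below: "m < h" if "enat m < npk i" "arr i m \<le> vt u" for m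
    proof (rule ccontr)
      assume "\<not> m < h"
      hence "enat h < npk i" using that(1) by (meson enat_ord_simps(1) le_less_trans not_less)
      moreover have "arr i h \<le> vt u" using arr_mono[OF i _ that(1), of h] \<open>\<not> m < h\<close> that(2) by simp
      ultimately show False using ne unfolding qnonempty_def Let_def h_def by simp
    qed
    define F where "F = {m. enat m < npk i \<and> arr i m < t}"
    have finF: "finite F" using arr_locfin i F_def by simp
    define T where "T = arr i ` {m \<in> F. vt u < arr i m}"
    have finT: "finite T" using finF T_def by simp
    define \<tau> where "\<tau> = Min (insert t T)"
    have tau_le: "\<tau> \<le> t" unfolding \<tau>_def using finT by simp
    have tau_gt: "vt u < \<tau>" unfolding \<tau>_def using finT vu by (auto simp: T_def)
    have tau_arr: "arr i m \<le> vt u" if "enat m < npk i" "arr i m < \<tau>" for m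
    proof (rule ccontr)
      assume "\<not> ?thesis"
      hence "arr i m \<in> T" using that tau_le by (auto simp: T_def F_def)
      hence "\<tau> \<le> arr i m" unfolding \<tau>_def using finT by simp
      thus False using that by simp
    qed
    have lt: "Dep n sz sent et i \<tau> < Arr npk arr sz i \<tau>"
      using bp tau_le tau_gt s_le unfolding backlogged_period_def by auto
    let ?P = "{x. x < u \<and> sent x \<and> x mod n = i}"
    have szpos: "0 \<le> sz i m" if "m < h" for m
    proof -
      have "m \<in> NS i ` ?P" using that NS_image[of i u] h_def by simp
      then obtain x where x: "x \<in> ?P" "m = NS i x" by blast
      have "lmin i \<le> sz i (NS i x)" using sz_sent(1)[OF i, of x] x by simp
      moreover have "0 < lmin i" using l_pos i by simp
      ultimately show ?thesis using x by simp
    qed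
    have "Arr npk arr sz i \<tau> \<le> (\<Sum>m\<in>{..<h}. sz i m)"
      unfolding Arr_def
    proof (rule sum_mono2)
      show "{m. enat m < npk i \<and> arr i m < \<tau>} \<subseteq> {..<h}" using below tau_arr by auto
    qed (use szpos in auto)
    also have "(\<Sum>m\<in>{..<h}. sz i m) = (\<Sum>x\<in>?P. sz i (NS i x))"
      unfolding h_def NS_image[of i u, symmetric]
      by (rule sum.reindex_cong[OF inj_on_subset[OF NS_inj]]) auto
    also have "\<dots> \<le> Dep n sz sent et i \<tau>"
      unfolding Dep_alt
    proof (rule sum_mono2[OF S_finite[OF i]])
      show "?P \<subseteq> {v. sent v \<and> v mod n = i \<and> et v < \<tau>}"
      proof
        fix x assume x: "x \<in> ?P"
        then have "et x \<le> vt (Suc x)" using sent_et by auto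
        moreover have "vt (Suc x) \<le> vt u" using x vt_mono by auto
        ultimately show "x \<in> {v. sent v \<and> v mod n = i \<and> et v < \<tau>}" using x tau_gt by auto
      qed
    next
      fix x assume "x \<in> {v. sent v \<and> v mod n = i \<and> et v < \<tau>} - ?P"
      then show "0 \<le> sz i (NS i x)" using sz_sent[OF i, of x] l_pos i by force
    qed
    finally show False using lt by simp
  qed
  hence "sent u" using sent_iff ui by simp
  then show ?thesis using sent_et[of u] s_le lt_t by force
qed

end


theorem mainTheorem3:
  fixes n :: nat and w :: "nat \<Rightarrow> nat" and npk :: "nat \<Rightarrow> enat"
    and arr sz :: "nat \<Rightarrow> nat \<Rightarrow> real" and lmin lmax :: "nat \<Rightarrow> real"
    and vt et :: "nat \<Rightarrow> real" and sent :: "nat \<Rightarrow> bool"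
    and i j :: nat and s t :: real
  assumes w_pos: "\<forall>k<n. 0 < w k"
    and l_pos: "\<forall>k<n. 0 < lmin k \<and> lmin k \<le> lmax k"
    and sz_bounds: "\<forall>k<n. \<forall>m. enat m < npk k \<longrightarrow> lmin k \<le> sz k m \<and> sz k m \<le> lmax k"
    and arr_nonneg: "\<forall>k<n. \<forall>m. enat m < npk k \<longrightarrow> 0 \<le> arr k m"
    and arr_fifo: "\<forall>k<n. \<forall>m. enat (Suc m) < npk k \<longrightarrow> arr k m \<le> arr k (Suc m)"
    and arr_locfin: "\<forall>k<n. \<forall>\<tau>. finite {m. enat m < npk k \<and> arr k m < \<tau>}"
    and run: "iwrr_run n w npk arr vt sent et"
    and i: "i < n" and j: "j < n" and ij: "j \<noteq> i"
    and bp: "backlogged_period (Dep n sz sent et i) (Arr npk arr sz i) s t"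
  shows "(Dep n sz sent et i t - Dep n sz sent et i s) / (real (w i) * lmin i)
         \<ge> max 0 (Dep n sz sent et j t - Dep n sz sent et j s
                   - (max 0 (real (w j) - real (w i)) + 1) * lmax j)
           / ((real (w j) + real (w i)) * lmax j)"
proof -
  interpret iwrr n w npk arr sz lmin lmax vt et sent
    using assms by unfold_locales auto
  have st: "s \<le> t" using bp unfolding backlogged_period_def by simp
  define Ti where "Ti = {v. sent v \<and> v mod n = i \<and> s \<le> et v \<and> et v < t}"
  define Tj where "Tj = {v. sent v \<and> v mod n = j \<and> s \<le> et v \<and> et v < t}"
  have finTi: "finite Ti" unfolding Ti_def by (rule finite_subset[OF _ S_finite[OF i, of t]]) auto
  have finTj: "finite Tj" unfolding Tj_def by (rule finite_subset[OF _ S_finite[OF j, of t]]) auto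
  define X where "X = Dep n sz sent et i t - Dep n sz sent et i s"
  define Y where "Y = Dep n sz sent et j t - Dep n sz sent et j s"
  have X: "real (card Ti) * lmin i \<le> X"
  proof -
    have "X = (\<Sum>v\<in>Ti. sz i (NS i v))" unfolding X_def Ti_def by (rule Dep_diff[OF i st])
    moreover have "real (card Ti) * lmin i \<le> (\<Sum>v\<in>Ti. sz i (NS i v))"
      using sum_bounded_below[of Ti "lmin i" "\<lambda>v. sz i (NS i v)"] sz_sent(1)[OF i] unfolding Ti_def by auto
    ultimately show ?thesis by simp
  qed
  have Y: "Y \<le> real (card Tj) * lmax j"
  proof -
    have "Y = (\<Sum>v\<in>Tj. sz j (NS j v))" unfolding Y_def Tj_def by (rule Dep_diff[OF j st])
    moreover have "(\<Sum>v\<in>Tj. sz j (NS j v)) \<le> real (card Tj) * lmax j"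
      using sum_bounded_above[of Tj "\<lambda>v. sz j (NS j v)" "lmax j"] sz_sent(2)[OF j] unfolding Tj_def by auto
    ultimately show ?thesis by simp
  qed
  have key: "int (w i) * int (card Tj) \<le> int (card Ti) * (int (w i) + int (w j)) + int (w i) * (max 0 (int (w j) - int (w i)) + 1)"
  proof (cases "Tj = {}")
    case True then show ?thesis by simp
  next
    case False
    define a where "a = Min Tj"
    define b where "b = Max Tj"
    have aT: "a \<in> Tj" and bT: "b \<in> Tj" using False finTj a_def b_def by auto
    have ab: "a \<le> b" using False finTj a_def b_def by simp
    define Ej where "Ej = {v. a \<le> v \<and> v \<le> b \<and> v mod n = j \<and> (v div n) mod W < w j}"
    define Ei where "Ei = {u. a < u \<and> u < b \<and> u mod n = i \<and> (u div n) mod W < w i}"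
    have "Tj \<subseteq> Ej"
    proof
      fix v assume v: "v \<in> Tj"
      then have "a \<le> v" "v \<le> b" using finTj a_def b_def by auto
      moreover have "(v div n) mod W < w j" using v sent_iff unfolding Tj_def by auto
      ultimately show "v \<in> Ej" using v unfolding Ej_def Tj_def by auto
    qed
    hence c1: "card Tj \<le> card Ej" by (intro card_mono) (auto simp: Ej_def intro: finite_subset[of _ "{a..b}"])
    have "Ei \<subseteq> Ti"
    proof
      fix u assume u: "u \<in> Ei"
      have "sent u \<and> s \<le> et u \<and> et u < t"
        by (rule backlog[OF i bp, of a b u]) (use aT bT u in \<open>auto simp: Tj_def Ei_def\<close>)
      then show "u \<in> Ti" using u unfolding Ti_def Ei_def by auto
    qed
    hence c2: "card Ei \<le> card Ti" using finTi by (intro card_mono) auto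
    have am: "a mod n = j" and bm: "b mod n = j" using aT bT unfolding Tj_def by auto
    have ac: "(a div n) mod W < w j" and bc: "(b div n) mod W < w j"
      using aT bT sent_iff am bm unfolding Tj_def by auto
    have vc: "int (w i) * int (card Ej) \<le> int (card Ei) * (int (w i) + int (w j)) + int (w i) * (max 0 (int (w j) - int (w i)) + 1)"
      unfolding Ej_def Ei_def
      by (rule visit_comb[OF npos W_pos i j]) (use ij w_pos w_le_W i j ab am bm ac bc in auto)
    have "int (w i) * int (card Tj) \<le> int (w i) * int (card Ej)" using c1 by (simp add: mult_left_mono)
    also have "\<dots> \<le> int (card Ei) * (int (w i) + int (w j)) + int (w i) * (max 0 (int (w j) - int (w i)) + 1)" by (rule vc)
    also have "\<dots> \<le> int (card Ti) * (int (w i) + int (w j)) + int (w i) * (max 0 (int (w j) - int (w i)) + 1)"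
      using c2 by (intro add_right_mono mult_right_mono) auto
    finally show ?thesis .
  qed
  define D where "D = max 0 (real (w j) - real (w i))"
  define Ni where "Ni = real (card Ti)"
  define Nj where "Nj = real (card Tj)"
  have keyR: "real (w i) * Nj \<le> Ni * (real (w i) + real (w j)) + real (w i) * (D + 1)"
  proof -
    have "real_of_int (int (w i) * int (card Tj)) \<le> real_of_int (int (card Ti) * (int (w i) + int (w j)) + int (w i) * (max 0 (int (w j) - int (w i)) + 1))"
      using key by (simp only: of_int_le_iff)
    then show ?thesis unfolding D_def Ni_def Nj_def by (simp add: of_int_max)
  qed
  have wi: "0 < real (w i)" and wj: "0 < real (w j)" using w_pos i j by auto
  have L: "0 < lmin i" and U: "0 < lmax j" using l_pos i j by (auto intro: less_le_trans)
  have Ni0: "0 \<le> Ni" unfolding Ni_def by simp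
  have X0: "0 \<le> X" using X Ni0 L unfolding Ni_def by (smt (verit) mult_nonneg_nonneg)
  have goal: "max 0 (Y - (D + 1) * lmax j) / ((real (w j) + real (w i)) * lmax j) \<le> X / (real (w i) * lmin i)"
  proof (cases "Y - (D + 1) * lmax j \<le> 0")
    case True
    then show ?thesis using X0 wi L by simp
  next
    case False
    have p1: "(Y - (D + 1) * lmax j) * (real (w i) * lmin i) \<le> (Nj - (D+1)) * lmax j * (real (w i) * lmin i)"
      using Y U wi L unfolding Nj_def by (intro mult_right_mono) (auto simp: algebra_simps)
    have "(Nj - (D+1)) * real (w i) \<le> Ni * (real (w j) + real (w i))" using keyR by (simp add: algebra_simps)
    hence p2: "(Nj - (D+1)) * lmax j * (real (w i) * lmin i) \<le> Ni * (real (w j) + real (w i)) * lmax j * lmin i"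
      using U L by (smt (verit, ccfv_SIG) mult.assoc mult.commute mult_right_mono mult_pos_pos)
    have p3: "Ni * (real (w j) + real (w i)) * lmax j * lmin i \<le> X * ((real (w j) + real (w i)) * lmax j)"
    proof -
      have "Ni * lmin i * ((real (w j) + real (w i)) * lmax j) \<le> X * ((real (w j) + real (w i)) * lmax j)"
        using X wi wj U unfolding Ni_def by (intro mult_right_mono) auto
      then show ?thesis by (simp add: algebra_simps)
    qed
    have "(Y - (D + 1) * lmax j) * (real (w i) * lmin i) \<le> X * ((real (w j) + real (w i)) * lmax j)"
      using p1 p2 p3 by linarith
    then show ?thesis using False wi wj U L by (simp add: divide_le_eq le_divide_eq mult_pos_pos frac_le_eq)
  qed
  then show ?thesis unfolding X_def Y_def D_def .
qed

end
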